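(* Let $p$ be an odd prime, $t,s$ positive integers, $r=p^t$, $q=r^s$, $T=q+1$, and let $\chi(x)=\zeta_p^{\mathrm{Tr}_{q^2/p}(x)}$ ($\zeta_p=e^{2\pi i/p}$) be the canonical additive character of $\mathbb{F}_{q^2}$. For $a\in\mathbb{F}_{q^2}^*$ let $$P=\sum_{x\in\mathbb{F}_{q^2},\ \mathrm{Tr}_{q/r}(x^T)=0}\chi(ax).$$ Then $P=-\frac{q}{r}(r-1)$ if $\mathrm{Tr}_{q/r}(a^T)=0$, and $P=\frac{q}{r}$ if $\mathrm{Tr}_{q/r}(a^T)\neq0$.
   Context: $\mathrm{Tr}_{q/r}$ is the trace from $\mathbb{F}_q$ to $\mathbb{F}_r$ and $\mathrm{Tr}_{q^2/p}$ the absolute trace of $\mathbb{F}_{q^2}$; note $x^{q+1}\in\mathbb{F}_q$ for $x\in\mathbb{F}_{q^2}$. *)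

theory Defs
  imports Complex_Main "HOL-Computational_Algebra.Primes"
begin

definition rel_trace :: "nat \<Rightarrow> nat \<Rightarrow> 'a::field \<Rightarrow> 'a" where
  "rel_trace r s y = (\<Sum>i<s. y ^ (r ^ i))"

definition abs_trace :: "nat \<Rightarrow> nat \<Rightarrow> 'a::field \<Rightarrow> 'a" where
  "abs_trace p n x = (\<Sum>i<n. x ^ (p ^ i))"

text \<open>Canonical additive character of F_{p^n}: zeta_p to the power of the absolute trace,
  the trace (an element of the prime field) being identified with its representative k < p.\<close>
definition add_char :: "nat \<Rightarrow> nat \<Rightarrow> 'a::field \<Rightarrow> complex" where
  "add_char p n x = exp (2 * pi * \<i> * of_nat (THE k. k < p \<and> of_nat k = abs_trace p n x) / of_nat p)"

end

theory Submission
  imports Defs "HOL-Computational_Algebra.Polynomial" "HOL-Number_Theory.Cong" "HOL-Analysis.Complex_Transcendental"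
begin

lemma field_pow_card_same:
  fixes x :: "'a :: {field,finite}"
  shows   "x ^ card (UNIV :: 'a set) = x"
proof (cases "x = 0")
  case False
  have "x * (\<Prod>y\<in>UNIV-{0}. x * y) = x * x ^ (card (UNIV :: 'a set) - 1) * \<Prod>(UNIV-{0})"
    by (simp add: prod.distrib mult_ac)
  also have "x * x ^ (card (UNIV :: 'a set) - 1) = x ^ Suc (card (UNIV :: 'a set) - 1)"
    by (subst power_Suc) auto
  also have "Suc (card (UNIV :: 'a set) - 1) = card (UNIV :: 'a set)"
    using finite_UNIV_card_ge_0[where ?'a = 'a] by simp
  also have "(\<Prod>y\<in>UNIV-{0}. x * y) = (\<Prod>y\<in>UNIV-{0}. y)"
    by (rule prod.reindex_bij_witness[of _ "\<lambda>y. y / x" "\<lambda>y. x * y"]) (use False in auto)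
  finally show ?thesis
    by simp
qed (use finite_UNIV_card_ge_0[where ?'a = 'a] in auto)

lemma sum_cyc_shift:
  fixes f :: "nat \<Rightarrow> 'b::cancel_comm_monoid_add"
  assumes "f n = f 0"
  shows "(\<Sum>i<n. f (Suc i)) = (\<Sum>i<n. f i)"
proof -
  have "f 0 + (\<Sum>i<n. f (Suc i)) = (\<Sum>i<n. f i) + f n"
    using sum.lessThan_Suc_shift[of f n] sum.lessThan_Suc[of f n] by simp
  thus ?thesis using assms by (simp add: add.commute)
qed

lemma sum_split_mult:
  fixes f :: "nat \<Rightarrow> 'b::comm_monoid_add"
  shows "(\<Sum>i<m*d. f i) = (\<Sum>k<d. \<Sum>j<m. f (m*k + j))"
proof -
  have "(\<Sum>i<m*d. f i) = (\<Sum>k<d. \<Sum>i\<in>{k*m..<k*m+m}. f i)"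
    using sum.nat_group[of f m d] by (simp add: mult.commute)
  also have "\<dots> = (\<Sum>k<d. \<Sum>j<m. f (m*k+j))"
  proof (rule sum.cong[OF refl])
    fix k
    have "(\<Sum>i\<in>{0+k*m..<m+k*m}. f i) = (\<Sum>j\<in>{0..<m}. f (j + k*m))"
      by (rule sum.shift_bounds_nat_ivl)
    thus "(\<Sum>i\<in>{k*m..<k*m+m}. f i) = (\<Sum>j<m. f (m*k+j))"
      by (simp add: atLeast0LessThan add.commute mult.commute)
  qed
  finally show ?thesis .
qed

lemma roots_card_lower:
  fixes f g :: "'a::{field,finite} poly"
  assumes "g \<noteq> 0" "\<And>x. poly f x = 0 \<or> poly g x = 0"
  shows "card (UNIV::'a set) \<le> card {x. poly f x = 0} + degree g"
proof -
  have "UNIV = {x. poly f x = 0} \<union> {x. poly g x = 0}" using assms(2) by auto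
  hence "card (UNIV::'a set) \<le> card {x. poly f x = 0} + card {x. poly g x = 0}"
    by (metis card_Un_le)
  also have "card {x. poly g x = 0} \<le> degree g" by (rule card_poly_roots_bound[OF assms(1)])
  finally show ?thesis by simp
qed

lemma roots_card_upper:
  fixes a :: "'a::field"
  assumes "k \<ge> 2"
  shows "card {x. x ^ k - a * x - b = 0} \<le> k"
proof -
  define f where "f = Polynomial.monom 1 k - [:b, a:]"
  have pf: "poly f x = x ^ k - a * x - b" for x by (simp add: f_def poly_monom algebra_simps)
  have "coeff f k = 1" using assms by (simp add: f_def coeff_pCons split: nat.split)
  hence "f \<noteq> 0" by auto
  have "degree [:b,a:] \<le> 1" using degree_pCons_le[of b "[:a:]"] by simp
  hence "degree f \<le> k" unfolding f_def using assms
    by (intro degree_diff_le degree_monom_le) auto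
  moreover have "card {x. poly f x = 0} \<le> degree f" by (rule card_poly_roots_bound[OF \<open>f \<noteq> 0\<close>])
  ultimately show ?thesis using pf by simp
qed

context
  fixes p n :: nat
  assumes cardU: "card (UNIV :: 'a::{field,finite} set) = p ^ n"
    and pp: "prime p" and npos: "n > 0"
begin

lemma CHAR_eq: "CHAR('a) = p"
proof -
  have "prime CHAR('a)"
    using prime_CHAR_semidom[where 'a='a] finite_imp_CHAR_pos[where 'a='a] by simp
  moreover have "CHAR('a) dvd p ^ n"
  proof -
    have "(\<Sum>y\<in>(UNIV::'a set). 1 + y) = (\<Sum>y\<in>UNIV. y)"
      by (rule sum.reindex_bij_witness[of _ "\<lambda>y. y - 1" "\<lambda>y. 1 + y"]) auto
    hence "of_nat (card (UNIV::'a set)) = (0::'a)" by (simp add: sum.distrib)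
    thus ?thesis using cardU of_nat_eq_0_iff_char_dvd by metis
  qed
  ultimately show ?thesis using pp prime_dvd_power prime_nat_iff by (metis primes_dvd_imp_eq)
qed

lemma primeCHAR: "prime CHAR('a)" using CHAR_eq pp by simp

lemma frob: "((x::'a) + y) ^ (p ^ k) = x ^ (p ^ k) + y ^ (p ^ k)"
  using freshmans_dream'[OF primeCHAR] CHAR_eq by simp

lemma frob_sum: "(sum (f :: _ \<Rightarrow> 'a) A) ^ (p ^ k) = (\<Sum>i\<in>A. f i ^ (p ^ k))"
  using freshmans_dream_sum'[OF primeCHAR, of "p^k" k] CHAR_eq by simp

lemma of_nat_p: "(of_nat p :: 'a) = 0"
  using CHAR_eq of_nat_CHAR by metis

lemma pow_q: "(x::'a) ^ (p ^ n) = x"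
  using field_pow_card_same cardU by metis

lemma pow_q_mult: "(x::'a) ^ (p ^ (n * j)) = x"
  by (induction j) (simp_all add: power_add power_mult pow_q)

lemma p2: "p \<ge> 2" using pp prime_ge_2_nat by blast

lemma card_K:
  assumes "0 < m" "m dvd n"
  shows "card {x::'a. x ^ (p ^ m) = x} = p ^ m"
proof -
  obtain k where nk: "n = m * k" using assms by blast
  have kpos: "k > 0" using nk npos by auto
  have pm: "p ^ m \<ge> 2" using p2 assms(1) self_le_power[of p m] by simp
  define M where "M = p ^ m - 1"
  have M1: "M \<ge> 1" using pm M_def by simp
  have "int ((p^m)^k - 1) = int (p^m)^k - 1" using pm by (simp add: of_nat_diff)
  also have "\<dots> = (int (p^m) - 1) * (\<Sum>i<k. int (p^m) ^ i)" by (rule power_diff_1_eq)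
  also have "\<dots> = int M * int (\<Sum>i<k. (p^m) ^ i)" using pm M_def by (simp add: of_nat_diff)
  finally have "(p^m)^k - 1 = M * (\<Sum>i<k. (p^m) ^ i)" by (metis of_nat_eq_iff of_nat_mult)
  hence "M dvd p ^ n - 1" using nk by (simp add: power_mult)
  then obtain e where e: "p ^ n - 1 = M * e" by blast
  have pn: "p ^ n \<ge> p ^ m" using p2 dvd_imp_le[OF assms(2) npos] by (intro power_increasing) auto
  have e1: "e \<ge> 1" using e pn pm by (cases e) auto
  have pmS: "p ^ m = Suc M" using M_def pm by simp
  have pnS: "p ^ n = Suc (M * e)" using e pn pm by simp
  define g :: "'a poly" where "g = (\<Sum>j<e. Polynomial.monom 1 (M * j))"
  have pg: "poly g x = (\<Sum>j<e. (x ^ M) ^ j)" for x by (simp add: g_def poly_sum poly_monom power_mult)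
  have "poly g 0 = 1" unfolding pg using e1 M1
  proof -
    have "(\<Sum>j<e. ((0::'a) ^ M) ^ j) = (\<Sum>j\<in>{0}. ((0::'a) ^ M) ^ j)"
      by (rule sum.mono_neutral_right) (use e1 M1 in auto)
    thus "(\<Sum>j<e. ((0::'a) ^ M) ^ j) = 1" by simp
  qed
  hence g0: "g \<noteq> 0" by auto
  have dg: "degree g \<le> M * (e - 1)" unfolding g_def
    by (rule degree_sum_le) (auto intro!: order.trans[OF degree_monom_le])
  have "M * (e - 1) = p ^ n - p ^ m" using e M_def e1 pm by (simp add: algebra_simps diff_mult_distrib2)
  define f :: "'a poly" where "f = Polynomial.monom 1 (p ^ m) - [:0, 1:]"
  have pf: "poly f x = x ^ (p ^ m) - x" for x by (simp add: f_def poly_monom)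
  have "poly f x = 0 \<or> poly g x = 0" for x
  proof -
    have "poly f x * poly g x = x * ((x ^ M - 1) * (\<Sum>j<e. (x ^ M) ^ j))"
      unfolding pf pg pmS by (simp add: algebra_simps)
    also have "\<dots> = x * (x ^ (M * e) - 1)" by (simp add: power_diff_1_eq power_mult)
    also have "\<dots> = x ^ (p ^ n) - x" unfolding pnS by (simp add: algebra_simps)
    also have "\<dots> = 0" using pow_q by simp
    finally show ?thesis by simp
  qed
  from roots_card_lower[OF g0 this] have "p ^ n \<le> card {x. poly f x = 0} + degree g" using cardU by simp
  hence lo: "p ^ m \<le> card {x::'a. x ^ (p ^ m) = x}" using dg \<open>M * (e - 1) = p ^ n - p ^ m\<close> pn unfolding pf by simp
  have "card {x::'a. x ^ (p ^ m) - 1 * x - 0 = 0} \<le> p ^ m" by (rule roots_card_upper[OF pm])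
  thus ?thesis using lo by simp
qed

lemma ofnat_pow: "(of_nat j :: 'a) ^ (p ^ k) = of_nat j"
proof (induction j)
  case (Suc j)
  have "(of_nat (Suc j) :: 'a) ^ (p ^ k) = (of_nat j + 1) ^ (p ^ k)" by (simp add: add.commute)
  also have "\<dots> = of_nat j ^ (p ^ k) + 1 ^ (p ^ k)" by (rule frob)
  finally show ?case using Suc by simp
qed (use p2 in simp)

lemma ofnat_inj: "j < p \<Longrightarrow> l < p \<Longrightarrow> (of_nat j :: 'a) = of_nat l \<Longrightarrow> j = l"
  using of_nat_eq_iff_cong_CHAR[where 'a='a, of j l] CHAR_eq by (simp add: cong_def)

lemma prime_field: "(y::'a) ^ p = y \<Longrightarrow> \<exists>k<p. of_nat k = y"
proof -
  assume y: "y ^ p = y"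
  define A where "A = (of_nat ` {..<p} :: 'a set)"
  have sub: "A \<subseteq> {y::'a. y ^ p - 1 * y - 0 = 0}" unfolding A_def using ofnat_pow[of _ 1] by auto
  have "card A = p" unfolding A_def by (subst card_image) (auto simp: inj_on_def intro: ofnat_inj)
  moreover have "card {y::'a. y ^ p - 1 * y - 0 = 0} \<le> p" by (rule roots_card_upper[OF p2])
  moreover have "card A \<le> card {y::'a. y ^ p - 1 * y - 0 = 0}" by (rule card_mono[OF _ sub]) simp
  ultimately have "A = {y::'a. y ^ p - 1 * y - 0 = 0}" using sub
    by (intro card_subset_eq[OF _ sub]) auto
  moreover have "y \<in> {y::'a. y ^ p - 1 * y - 0 = 0}" using y by simp
  ultimately have "y \<in> A" by simp
  thus ?thesis unfolding A_def by auto
qed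

lemma the_k: assumes "(y::'a) ^ p = y"
  shows "(THE k. k < p \<and> of_nat k = y) < p \<and> of_nat (THE k. k < p \<and> of_nat k = y) = y"
proof -
  have "\<exists>!k. k < p \<and> of_nat k = y" using prime_field[OF assms] ofnat_inj by blast
  from theI'[OF this] show ?thesis .
qed

abbreviation tr :: "'a \<Rightarrow> 'a" where "tr x \<equiv> abs_trace p n x"

lemma tr_add: "tr (x + y) = tr x + tr y"
  unfolding abs_trace_def by (simp add: frob sum.distrib)

lemma tr_pow_p: "tr x ^ p = tr x"
proof -
  have "tr x ^ (p ^ 1) = (\<Sum>i<n. (x ^ p ^ i) ^ (p ^ 1))" unfolding abs_trace_def by (rule frob_sum)
  also have "\<dots> = (\<Sum>i<n. x ^ p ^ Suc i)" by (simp add: power_mult[symmetric] mult.commute)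
  also have "\<dots> = tr x" unfolding abs_trace_def by (rule sum_cyc_shift) (simp add: pow_q)
  finally show ?thesis by simp
qed

lemma tr_frob1: "tr (x ^ p) = tr x"
proof -
  have "tr (x ^ p) = (\<Sum>i<n. x ^ p ^ Suc i)" unfolding abs_trace_def
    by (simp add: power_mult[symmetric])
  also have "\<dots> = tr x" unfolding abs_trace_def by (rule sum_cyc_shift) (simp add: pow_q)
  finally show ?thesis .
qed

lemma tr_frob: "tr (x ^ (p ^ k)) = tr x"
proof (induction k)
  case (Suc k)
  have "x ^ (p ^ Suc k) = (x ^ (p ^ k)) ^ p" by (metis power_Suc2 power_mult)
  thus ?case using tr_frob1 Suc by simp
qed simp

definition kk :: "'a \<Rightarrow> nat" where "kk x = (THE k. k < p \<and> of_nat k = tr x)"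

lemma kk: "kk x < p" "of_nat (kk x) = tr x"
  using the_k[OF tr_pow_p[of x]] unfolding kk_def by auto

definition zeta :: complex where "zeta = exp (2 * pi * \<i> / of_nat p)"

lemma chi_zeta: "add_char p n x = zeta ^ kk x"
proof -
  have "2 * pi * \<i> * of_nat (kk x) / of_nat p = of_nat (kk x) * (2 * pi * \<i> / of_nat p)" by simp
  thus ?thesis unfolding add_char_def zeta_def kk_def[symmetric] by (simp only: exp_of_nat_mult)
qed

lemma zeta_p: "zeta ^ p = 1"
proof -
  have "zeta ^ p = exp (of_nat p * (2 * pi * \<i> / of_nat p))" unfolding zeta_def by (simp only: exp_of_nat_mult)
  also have "of_nat p * (2 * pi * \<i> / of_nat p) = 2 * pi * \<i>" using p2 by simp
  finally show ?thesis by simp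
qed

lemma zeta_mod: "zeta ^ m = zeta ^ (m mod p)"
proof -
  have "zeta ^ m = zeta ^ (m mod p) * (zeta ^ p) ^ (m div p)"
    by (metis mod_mult_div_eq power_add power_mult)
  thus ?thesis by (simp add: zeta_p)
qed

lemma zeta_ne1: "0 < k \<Longrightarrow> k < p \<Longrightarrow> zeta ^ k \<noteq> 1"
proof
  assume k: "0 < k" "k < p" and z: "zeta ^ k = 1"
  have "zeta ^ k = exp (of_nat k * (2 * pi * \<i> / of_nat p))" unfolding zeta_def by (simp only: exp_of_nat_mult)
  with z obtain m :: int where m: "Im (of_nat k * (2 * pi * \<i> / of_nat p)) = of_int (2 * m) * pi"
    using exp_eq_1 by metis
  have "Im (of_nat k * (2 * pi * \<i> / of_nat p)) = 2 * pi * k / p" by simp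
  with m have "2 * pi * real k / real p = of_int (2 * m) * pi" by simp
  hence "2 * pi * real k = of_int (2 * m) * pi * real p" using p2 by (simp add: divide_eq_eq)
  hence "pi * (2 * real k) = pi * (2 * of_int m * real p)" by (simp add: algebra_simps)
  hence "real k = of_int m * real p" by simp
  hence km: "int k = m * int p" by (metis of_int_eq_iff of_int_mult of_int_of_nat_eq)
  show False
  proof (cases "m \<le> 0")
    case True
    hence "m * int p \<le> 0" by (simp add: mult_nonpos_nonneg)
    thus False using km k by simp
  next
    case False
    hence "m * int p \<ge> 1 * int p" by (intro mult_right_mono) auto
    moreover have "int k < int p" using k by simp
    ultimately show False using km by linarith
  qed
qed

lemma chi_add: "add_char p n ((x::'a) + y) = add_char p n x * add_char p n y"
proof -
  have "(of_nat (kk (x + y)) :: 'a) = of_nat (kk x + kk y)" using kk tr_add by simp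
  hence "[kk (x + y) = kk x + kk y] (mod CHAR('a))" using of_nat_eq_iff_cong_CHAR by blast
  hence "kk (x + y) mod p = (kk x + kk y) mod p" unfolding CHAR_eq cong_def .
  hence "kk (x + y) = (kk x + kk y) mod p" using kk(1)[of "x+y"] by simp
  thus ?thesis unfolding chi_zeta by (metis zeta_mod power_add)
qed

lemma chi_tr: "tr x = tr y \<Longrightarrow> add_char p n x = add_char p n y"
  unfolding add_char_def by simp

lemma chi_zero_tr: "tr x = 0 \<Longrightarrow> add_char p n x = 1"
proof -
  assume "tr x = 0"
  hence "kk x = 0" using kk[of x] ofnat_inj[of "kk x" 0] p2 by simp
  thus ?thesis unfolding chi_zeta by simp
qed

lemma chi_nz_tr: "tr x \<noteq> 0 \<Longrightarrow> add_char p n x \<noteq> 1"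
proof -
  assume "tr x \<noteq> 0"
  hence "kk x \<noteq> 0" using kk(2)[of x] by (metis of_nat_0)
  thus ?thesis unfolding chi_zeta using zeta_ne1 kk(1)[of x] by auto
qed

lemma chi_0: "add_char p n (0::'a) = 1"
  by (rule chi_zero_tr) (use p2 in \<open>simp add: abs_trace_def power_0_left\<close>)

lemma charsum:
  assumes addA: "\<And>u v. u \<in> A \<Longrightarrow> v \<in> A \<Longrightarrow> u + v \<in> A" and negA: "\<And>u. u \<in> A \<Longrightarrow> - u \<in> A"
  shows "(\<Sum>c\<in>A. add_char p n (c * w)) = (if \<forall>c\<in>A. tr (c * w) = 0 then of_nat (card A) else 0)"
proof (cases "\<forall>c\<in>A. tr (c * w) = 0")
  case True
  thus ?thesis using chi_zero_tr by simp
next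
  case False
  then obtain c0 where c0: "c0 \<in> A" "tr (c0 * w) \<noteq> 0" by blast
  define S where "S = (\<Sum>c\<in>A. add_char p n (c * w))"
  have "S = (\<Sum>c\<in>A. add_char p n ((c0 + c) * w))" unfolding S_def
  proof -
    have im: "(\<lambda>c. c0 + c) ` A = A"
    proof
      show "(\<lambda>c. c0 + c) ` A \<subseteq> A" using addA[OF c0(1)] by auto
      show "A \<subseteq> (\<lambda>c. c0 + c) ` A"
      proof
        fix c assume c: "c \<in> A"
        have "c + - c0 \<in> A" using addA[OF c negA[OF c0(1)]] .
        moreover have "c = c0 + (c + - c0)" by simp
        ultimately show "c \<in> (\<lambda>c. c0 + c) ` A" by blast
      qed
    qed
    have "(\<Sum>c\<in>A. add_char p n (c * w)) = (\<Sum>c\<in>(\<lambda>c. c0 + c) ` A. add_char p n (c * w))"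
      using im by simp
    also have "\<dots> = (\<Sum>c\<in>A. add_char p n ((c0 + c) * w))"
      by (subst sum.reindex) (auto simp: inj_on_def)
    finally show "(\<Sum>c\<in>A. add_char p n (c * w)) = (\<Sum>c\<in>A. add_char p n ((c0 + c) * w))" .
  qed
  also have "\<dots> = add_char p n (c0 * w) * S" unfolding S_def
    by (simp add: distrib_right chi_add sum_distrib_left)
  finally have "(1 - add_char p n (c0 * w)) * S = 0" by (simp add: algebra_simps)
  hence "S = 0" using chi_nz_tr[OF c0(2)] by simp
  moreover have "(if \<forall>c\<in>A. tr (c * w) = 0 then of_nat (card A) else 0) = (0::complex)"
    using False by (rule if_not_P)
  ultimately show ?thesis using S_def by simp
qed

lemma pow_iter: "(c::'a) ^ b = c \<Longrightarrow> c ^ (b ^ k) = c"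
  by (induction k) (simp_all add: power_mult mult.commute power_Suc2 del: power_Suc)

lemma tr_reindex:
  assumes c: "(c::'a) ^ (p ^ m) = c"
  shows "abs_trace p (m * d) (c * w) = abs_trace p m (c * (\<Sum>k<d. w ^ ((p ^ m) ^ k)))"
proof -
  have "abs_trace p (m * d) (c * w) = (\<Sum>k<d. \<Sum>j<m. (c * w) ^ (p ^ (m * k + j)))"
    unfolding abs_trace_def by (rule sum_split_mult)
  also have "\<dots> = (\<Sum>k<d. \<Sum>j<m. (c * w ^ ((p ^ m) ^ k)) ^ (p ^ j))"
  proof (intro sum.cong refl)
    fix k j
    have "(c * w) ^ (p ^ (m * k + j)) = ((c * w) ^ ((p ^ m) ^ k)) ^ (p ^ j)"
      by (simp add: power_add power_mult)
    also have "(c * w) ^ ((p ^ m) ^ k) = c * w ^ ((p ^ m) ^ k)"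
      by (simp add: power_mult_distrib pow_iter[OF c])
    finally show "(c * w) ^ (p ^ (m * k + j)) = (c * w ^ ((p ^ m) ^ k)) ^ (p ^ j)" .
  qed
  also have "\<dots> = (\<Sum>j<m. \<Sum>k<d. (c * w ^ ((p ^ m) ^ k)) ^ (p ^ j))" by (rule sum.swap)
  also have "\<dots> = (\<Sum>j<m. (\<Sum>k<d. c * w ^ ((p ^ m) ^ k)) ^ (p ^ j))" by (simp add: frob_sum)
  also have "\<dots> = abs_trace p m (c * (\<Sum>k<d. w ^ ((p ^ m) ^ k)))"
    unfolding abs_trace_def by (simp add: sum_distrib_left)
  finally show ?thesis .
qed

lemma tr_nonzero:
  assumes "0 < m" "m dvd n"
  shows "\<exists>v::'a. v ^ (p ^ m) = v \<and> abs_trace p m v \<noteq> 0"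
proof (rule ccontr)
  assume H: "\<not> ?thesis"
  define f :: "'a poly" where "f = (\<Sum>i<m. Polynomial.monom 1 (p ^ i))"
  have pf: "poly f v = abs_trace p m v" for v by (simp add: f_def poly_sum poly_monom abs_trace_def)
  have inj: "p ^ i = p ^ j \<longleftrightarrow> i = j" for i j using p2 by (simp add: power_inject_exp)
  have "coeff f (p ^ (m - 1)) = (\<Sum>i<m. if i = m - 1 then 1 else 0)"
    unfolding f_def by (simp add: coeff_sum coeff_monom inj eq_commute)
  also have "\<dots> = 1" using assms(1) by simp
  finally have "f \<noteq> 0" by auto
  have "degree f \<le> p ^ (m - 1)" unfolding f_def
    by (rule degree_sum_le) (use p2 in \<open>auto intro!: order.trans[OF degree_monom_le] power_increasing\<close>)
  have "{v::'a. v ^ (p ^ m) = v} \<subseteq> {v. poly f v = 0}" using H pf by auto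
  hence "card {v::'a. v ^ (p ^ m) = v} \<le> card {v. poly f v = 0}" by (intro card_mono) auto
  also have "\<dots> \<le> p ^ (m - 1)" using card_poly_roots_bound[OF \<open>f \<noteq> 0\<close>] \<open>degree f \<le> _\<close> by linarith
  also have "\<dots> < p ^ m" using p2 assms(1) by (intro power_strict_increasing) auto
  finally show False using card_K[OF assms] by simp
qed

context
  fixes t s :: nat
  assumes nts: "n = 2 * t * s" and tpos: "t > 0" and spos: "s > 0" and oddp: "odd p"
begin

lemma two_nz: "(2::'a) \<noteq> 0"
proof
  assume "(2::'a) = 0"
  hence "(of_nat 2 :: 'a) = 0" by simp
  hence "p dvd 2" using of_nat_eq_0_iff_char_dvd CHAR_eq by metis
  hence "p \<le> 2" by (simp add: dvd_imp_le)
  thus False using p2 oddp by (metis le_antisym dvd_refl)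
qed

lemma two_pow: "(2::'a) ^ (p ^ k) = 2"
  using ofnat_pow[of 2 k] by simp

lemma neg_pow: "(- (x::'a)) ^ (p ^ k) = - (x ^ (p ^ k))"
  using oddp by (simp add: power_minus_odd)

lemma K_add: "(u::'a) ^ (p ^ m) = u \<Longrightarrow> v ^ (p ^ m) = v \<Longrightarrow> (u + v) ^ (p ^ m) = u + v"
  by (simp add: frob)

lemma K_neg: "(u::'a) ^ (p ^ m) = u \<Longrightarrow> (- u) ^ (p ^ m) = - u"
  by (simp add: neg_pow)

lemma K_mult: "(u::'a) ^ (p ^ m) = u \<Longrightarrow> v ^ (p ^ m) = v \<Longrightarrow> (u * v) ^ (p ^ m) = u * v"
  by (simp add: power_mult_distrib)

lemma K_div: "(u::'a) ^ (p ^ m) = u \<Longrightarrow> v ^ (p ^ m) = v \<Longrightarrow> (u / v) ^ (p ^ m) = u / v"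
  by (simp add: power_divide)

lemma t_dvd: "t dvd n" and ts_dvd: "t * s dvd n"
  using nts by auto

lemma Q_eq: "(p ^ t) ^ s = p ^ (t * s)" by (simp add: power_mult)

lemma Kr_Kq: "(c::'a) ^ (p ^ t) = c \<Longrightarrow> c ^ (p ^ (t * s)) = c"
  using pow_iter[of c "p ^ t" s] by (simp add: power_mult)

lemma pow_QQ: "(y::'a) ^ (p ^ (t * s) * p ^ (t * s)) = y"
proof -
  have "t * s + t * s = n" using nts by simp
  hence "p ^ (t * s) * p ^ (t * s) = p ^ n" by (metis power_add)
  thus ?thesis using pow_q by simp
qed

lemma Nm_Kq: "((y::'a) ^ (p ^ (t * s) + 1)) ^ (p ^ (t * s)) = y ^ (p ^ (t * s) + 1)"
proof -
  have "(y ^ (p ^ (t * s) + 1)) ^ (p ^ (t * s)) = y ^ (p ^ (t * s) * p ^ (t * s)) * y ^ (p ^ (t * s))"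
    by (simp add: power_mult[symmetric] power_add algebra_simps)
  thus ?thesis using pow_QQ by simp
qed

lemma RT_Kr:
  assumes u: "(u::'a) ^ (p ^ (t * s)) = u"
  shows "(rel_trace (p ^ t) s u) ^ (p ^ t) = rel_trace (p ^ t) s u"
proof -
  have "(rel_trace (p ^ t) s u) ^ (p ^ t) = (\<Sum>k<s. (u ^ ((p ^ t) ^ k)) ^ (p ^ t))"
    unfolding rel_trace_def by (rule frob_sum)
  also have "\<dots> = (\<Sum>k<s. u ^ ((p ^ t) ^ Suc k))" by (simp add: power_mult[symmetric] mult.commute)
  also have "\<dots> = rel_trace (p ^ t) s u" unfolding rel_trace_def
    by (rule sum_cyc_shift) (simp add: Q_eq u)
  finally show ?thesis .
qed

lemma indicator:
  assumes u: "(u::'a) ^ (p ^ (t * s)) = u"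
  shows "(\<Sum>c\<in>{c::'a. c ^ (p ^ t) = c}. add_char p n (c * (u / 2)))
         = (if rel_trace (p ^ t) s u = 0 then of_nat (p ^ t) else 0)"
proof -
  define RT where "RT = rel_trace (p ^ t) s u"
  have sumeq: "(\<Sum>k<2 * s. (u / 2) ^ ((p ^ t) ^ k)) = RT"
  proof -
    have "(\<Sum>k<s * 2. (u / 2) ^ ((p ^ t) ^ k)) = (\<Sum>k<2. \<Sum>j<s. (u / 2) ^ ((p ^ t) ^ (s * k + j)))"
      by (rule sum_split_mult)
    also have "\<dots> = (\<Sum>j<s. (u / 2) ^ ((p ^ t) ^ j)) + (\<Sum>j<s. (u / 2) ^ ((p ^ t) ^ (s + j)))"
      by (simp add: numeral_2_eq_2)
    also have "(\<Sum>j<s. (u / 2) ^ ((p ^ t) ^ (s + j))) = (\<Sum>j<s. (u / 2) ^ ((p ^ t) ^ j))"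
    proof (intro sum.cong refl)
      fix j
      have "(u / 2) ^ ((p ^ t) ^ (s + j)) = ((u / 2) ^ ((p ^ t) ^ s)) ^ ((p ^ t) ^ j)"
        by (simp add: power_add power_mult)
      also have "(u / 2) ^ ((p ^ t) ^ s) = u / 2" using u two_pow[of "t * s"] Q_eq by (simp add: power_divide)
      finally show "(u / 2) ^ ((p ^ t) ^ (s + j)) = (u / 2) ^ ((p ^ t) ^ j)" .
    qed
    also have "(\<Sum>j<s. (u / 2) ^ ((p ^ t) ^ j)) = RT / 2"
      unfolding RT_def rel_trace_def
      by (simp add: power_divide sum_divide_distrib two_pow[of "t * _"] flip: power_mult)
    finally show ?thesis using two_nz by (simp add: mult.commute)
  qed
  have trc: "tr (c * (u / 2)) = abs_trace p t (c * RT)" if c: "c ^ (p ^ t) = c" for c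
  proof -
    have nn: "n = t * (2 * s)" using nts by simp
    have "tr (c * (u / 2)) = abs_trace p (t * (2 * s)) (c * (u / 2))" by (simp only: nn)
    also have "\<dots> = abs_trace p t (c * (\<Sum>k<2 * s. (u / 2) ^ ((p ^ t) ^ k)))" by (rule tr_reindex[OF c])
    finally show ?thesis using sumeq by simp
  qed
  have cs: "(\<Sum>c\<in>{c::'a. c ^ (p ^ t) = c}. add_char p n (c * (u / 2))) =
      (if \<forall>c\<in>{c::'a. c ^ (p ^ t) = c}. tr (c * (u / 2)) = 0 then of_nat (card {c::'a. c ^ (p ^ t) = c}) else 0)"
    by (rule charsum) (auto intro: K_add K_neg)
  have iff: "(\<forall>c\<in>{c::'a. c ^ (p ^ t) = c}. tr (c * (u / 2)) = 0) \<longleftrightarrow> RT = 0"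
  proof
    assume "RT = 0" thus "\<forall>c\<in>{c::'a. c ^ (p ^ t) = c}. tr (c * (u / 2)) = 0"
      using trc p2 by (simp add: abs_trace_def power_0_left)
  next
    assume all: "\<forall>c\<in>{c::'a. c ^ (p ^ t) = c}. tr (c * (u / 2)) = 0"
    show "RT = 0"
    proof (rule ccontr)
      assume nz: "RT \<noteq> 0"
      obtain v :: 'a where v: "v ^ (p ^ t) = v" "abs_trace p t v \<noteq> 0" using tr_nonzero[OF tpos t_dvd] by blast
      have RTK: "RT ^ (p ^ t) = RT" unfolding RT_def by (rule RT_Kr[OF u])
      have "(v / RT) ^ (p ^ t) = v / RT" by (rule K_div[OF v(1) RTK])
      hence "tr ((v / RT) * (u / 2)) = abs_trace p t (v / RT * RT)" by (rule trc)
      also have "\<dots> \<noteq> 0" using nz v by simp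
      finally have "tr ((v / RT) * (u / 2)) \<noteq> 0" .
      moreover have "tr ((v / RT) * (u / 2)) = 0" using all \<open>(v / RT) ^ (p ^ t) = v / RT\<close> by blast
      ultimately show False by simp
    qed
  qed
  show ?thesis unfolding cs iff card_K[OF tpos t_dvd] RT_def ..
qed

lemma sum_ax: assumes "(a::'a) \<noteq> 0" shows "(\<Sum>x\<in>UNIV. add_char p n (a * x)) = 0"
proof -
  obtain v :: 'a where v: "abs_trace p n v \<noteq> 0" using tr_nonzero[OF npos dvd_refl] by blast
  have "(\<Sum>x\<in>UNIV. add_char p n (x * a)) = (if \<forall>c\<in>UNIV. tr (c * a) = 0 then of_nat (card (UNIV::'a set)) else 0)"
    by (rule charsum) auto
  moreover have "tr ((v / a) * a) \<noteq> 0" using v assms by simp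
  hence "\<not> (\<forall>c\<in>UNIV. tr (c * a) = 0)" by blast
  ultimately show ?thesis by (simp add: mult.commute)
qed

lemma card_Kq: "card {u::'a. u ^ (p ^ (t * s)) = u} = p ^ (t * s)"
  using card_K[OF _ ts_dvd] tpos spos by simp

lemma Q2: "p ^ (t * s) \<ge> 2"
  using p2 tpos spos self_le_power[of p "t * s"] by simp

lemma fiber_card:
  assumes u: "(u::'a) ^ (p ^ (t * s)) = u" and u0: "u \<noteq> 0"
  shows "card {y::'a. y ^ (p ^ (t * s) + 1) = u} = p ^ (t * s) + 1"
proof -
  define Q where "Q = p ^ (t * s)"
  have Q2': "Q \<ge> 2" using Q2 Q_def by simp
  define K where "K = {u::'a. u ^ Q = u}"
  define T where "T = K - {0}"
  define S where "S = (UNIV :: 'a set) - {0}"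
  define F where "F u = {y::'a. y ^ (Q + 1) = u}" for u
  have Fle: "card (F v) \<le> Q + 1" for v
  proof -
    have "card {y::'a. y ^ (Q + 1) - 0 * y - v = 0} \<le> Q + 1" by (rule roots_card_upper) (use Q2' in simp)
    thus ?thesis unfolding F_def by simp
  qed
  have gST: "(\<lambda>y. y ^ (Q + 1)) ` S \<subseteq> T" unfolding S_def T_def K_def Q_def using Nm_Kq by auto
  have "(\<Sum>v\<in>T. card {y \<in> S. y ^ (Q + 1) = v}) = (\<Sum>y\<in>S. 1)"
    using sum.group[OF finite finite gST, of "\<lambda>_. 1::nat"] by simp
  moreover have "{y \<in> S. y ^ (Q + 1) = v} = F v" if "v \<in> T" for v
    using that unfolding S_def T_def F_def by auto
  ultimately have sumF: "(\<Sum>v\<in>T. card (F v)) = card S" by simp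
  have "card S = p ^ n - 1" unfolding S_def using cardU by (simp add: card_Diff_singleton)
  also have "p ^ n = Q * Q" using pow_QQ unfolding Q_def
    by (metis nts power_add mult_2 mult.assoc)
  finally have cS: "card S = Q * Q - 1" .
  have "card T = Q - 1" unfolding T_def K_def Q_def using card_Kq p2
    by (simp add: card_Diff_singleton zero_power)
  hence "(\<Sum>v\<in>T. Q + 1) = (Q - 1) * (Q + 1)" by simp
  also have "\<dots> = Q * Q - 1" using Q2' by (cases Q) (simp_all add: algebra_simps)
  finally have "(\<Sum>v\<in>T. card (F v)) = (\<Sum>v\<in>T. Q + 1)" using sumF cS by simp
  from sum_mono_inv[OF this] Fle have "card (F u) = Q + 1"
    using u u0 unfolding T_def K_def Q_def by auto
  thus ?thesis unfolding F_def Q_def .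
qed

lemma gauss0:
  assumes c: "(c::'a) ^ (p ^ t) = c" and c0: "c \<noteq> 0"
  shows "(\<Sum>y\<in>UNIV. add_char p n (c * (y ^ (p ^ (t * s) + 1) / 2))) = - of_nat (p ^ (t * s))"
proof -
  define Q where "Q = p ^ (t * s)"
  define K where "K = {u::'a. u ^ Q = u}"
  define h where "h u = add_char p n (c * (u / 2))" for u
  have cK: "c ^ Q = c" using Kr_Kq[OF c] Q_def by simp
  have gK: "(\<lambda>y. y ^ (Q + 1)) ` UNIV \<subseteq> K" unfolding K_def Q_def using Nm_Kq by auto
  have h0: "h 0 = 1" unfolding h_def using chi_0 by simp
  have "(\<Sum>y\<in>UNIV. h (y ^ (Q + 1))) = (\<Sum>u\<in>K. \<Sum>y\<in>{y \<in> UNIV. y ^ (Q + 1) = u}. h (y ^ (Q + 1)))"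
    using sum.group[OF finite finite gK, of "\<lambda>y. h (y ^ (Q + 1))"] by simp
  also have "\<dots> = (\<Sum>u\<in>K. of_nat (card {y. y ^ (Q + 1) = u}) * h u)"
    by (intro sum.cong refl) simp
  also have "\<dots> = of_nat (card {y::'a. y ^ (Q + 1) = 0}) * h 0 + (\<Sum>u\<in>K - {0}. of_nat (Q + 1) * h u)"
  proof -
    have "0 \<in> K" unfolding K_def Q_def using p2 by (simp add: zero_power)
    hence "(\<Sum>u\<in>K. of_nat (card {y. y ^ (Q + 1) = u}) * h u) =
        of_nat (card {y::'a. y ^ (Q + 1) = 0}) * h 0 + (\<Sum>u\<in>K - {0}. of_nat (card {y. y ^ (Q + 1) = u}) * h u)"
      by (simp add: sum.remove)
    also have "(\<Sum>u\<in>K - {0}. of_nat (card {y. y ^ (Q + 1) = u}) * h u) = (\<Sum>u\<in>K - {0}. of_nat (Q + 1) * h u)"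
    proof (intro sum.cong refl)
      fix u assume "u \<in> K - {0}"
      hence u: "u ^ (p ^ (t * s)) = u" "u \<noteq> 0" unfolding K_def Q_def by auto
      have "card {y. y ^ (Q + 1) = u} = Q + 1" unfolding Q_def by (rule fiber_card[OF u])
      thus "of_nat (card {y. y ^ (Q + 1) = u}) * h u = of_nat (Q + 1) * h u" by (simp only:)
    qed
    finally show ?thesis .
  qed
  also have "{y::'a. y ^ (Q + 1) = 0} = {0}" by auto
  also have "h 0 = 1" unfolding h_def using chi_0 by simp
  also have "(\<Sum>u\<in>K - {0}. of_nat (Q + 1) * h u) = of_nat (Q + 1) * ((\<Sum>u\<in>K. h u) - h 0)"
    using p2 by (simp add: sum_distrib_left[symmetric] sum_diff1 K_def Q_def zero_power)
  also have "(\<Sum>u\<in>K. h u) = 0"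
  proof -
    have cs: "(\<Sum>u\<in>K. add_char p n (u * (c / 2))) = (if \<forall>u\<in>K. tr (u * (c / 2)) = 0 then of_nat (card K) else 0)"
      by (rule charsum) (auto simp: K_def Q_def intro: K_add K_neg)
    have "\<not> (\<forall>u\<in>K. tr (u * (c / 2)) = 0)"
    proof -
      obtain v :: 'a where v: "v ^ (p ^ (t * s)) = v" "abs_trace p (t * s) v \<noteq> 0"
        using tr_nonzero[OF _ ts_dvd] tpos spos by auto
      have vK: "v / c \<in> K" unfolding K_def using K_div[OF v(1)] cK Q_def by simp
      have v2: "(v / 2) ^ (p ^ (t * s)) = v / 2" using K_div[OF v(1) two_pow] .
      have nn: "n = (t * s) * 2" using nts by simp
      have "tr ((v / c) * (c / 2)) = abs_trace p ((t * s) * 2) ((v / 2) * 1)" using c0 by (simp add: nn)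
      also have "\<dots> = abs_trace p (t * s) ((v / 2) * (\<Sum>k<2. 1 ^ ((p ^ (t * s)) ^ k)))"
        by (rule tr_reindex[OF v2])
      also have "\<dots> = abs_trace p (t * s) v" using two_nz by (simp add: numeral_2_eq_2)
      finally have "tr ((v / c) * (c / 2)) \<noteq> 0" using v(2) by simp
      thus ?thesis using vK by blast
    qed
    hence "(if \<forall>u\<in>K. tr (u * (c / 2)) = 0 then of_nat (card K) else 0) = (0::complex)" by (rule if_not_P)
    with cs have "(\<Sum>u\<in>K. add_char p n (u * (c / 2))) = 0" by (rule trans)
    moreover have "u * (c / 2) = c * (u / 2)" for u :: 'a by simp
    ultimately show ?thesis unfolding h_def by (simp only:)
  qed
  finally have "(\<Sum>y\<in>UNIV. h (y ^ (Q + 1))) = - of_nat Q" using h0 by simp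
  thus ?thesis unfolding h_def Q_def .
qed

lemma shift:
  assumes c: "(c::'a) ^ (p ^ t) = c" and c0: "c \<noteq> 0"
  shows "(\<Sum>x\<in>UNIV. add_char p n (c * (x ^ (p ^ (t * s) + 1) / 2) + a * x))
       = add_char p n (- (a ^ (p ^ (t * s) + 1)) / (2 * c)) * (\<Sum>y\<in>UNIV. add_char p n (c * (y ^ (p ^ (t * s) + 1) / 2)))"
proof -
  define Q where "Q = p ^ (t * s)"
  define b where "b = (- a / c) ^ Q"
  define D where "D = - (a ^ (Q + 1)) / (2 * c)"
  have cQ: "c ^ Q = c" using Kr_Kq[OF c] Q_def by simp
  have bQ: "b ^ Q = - a / c" unfolding b_def Q_def using pow_QQ by (simp add: power_mult[symmetric])
  have ab: "a / 2 * b = D"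
  proof -
    have "b = - (a ^ Q) / c" unfolding b_def Q_def using Kr_Kq[OF c] neg_pow[of "a / c" "t * s"]
      by (simp add: power_divide)
    thus ?thesis unfolding D_def by (simp add: field_simps power_Suc2 del: power_Suc)
  qed
  have pt: "tr (c * ((y + b) ^ (Q + 1) / 2) + a * (y + b)) = tr (c * (y ^ (Q + 1) / 2)) + tr D" for y
  proof -
    define Z where "Z = c / 2 * b * y ^ Q"
    have e1: "(y + b) ^ (Q + 1) = (y ^ Q + b ^ Q) * (y + b)"
      unfolding Q_def by (simp only: power_add power_one_right frob)
    have L: "c * ((y + b) ^ (Q + 1) / 2) + a * (y + b) = c * (y ^ (Q + 1) / 2) + Z + (a / 2 * y) + a / 2 * b"
      unfolding e1 bQ Z_def using c0 two_nz by (simp add: field_simps power_Suc2 del: power_Suc)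
    have "Z ^ Q = - (a / 2 * y)"
    proof -
      have "Z ^ Q = (c ^ Q / 2 ^ Q) * b ^ Q * y ^ (Q * Q)" unfolding Z_def
        by (simp add: power_mult_distrib power_divide power_mult)
      also have "\<dots> = (c / 2) * (- a / c) * y" using cQ bQ two_pow[of "t * s"] pow_QQ Q_def by simp
      also have "\<dots> = - (a / 2 * y)" using c0 by (simp add: field_simps)
      finally show ?thesis .
    qed
    hence trZ: "tr Z = tr (- (a / 2 * y))" using tr_frob[of Z "t * s"] Q_def by simp
    have cancel: "tr (- (a / 2 * y)) + tr (a / 2 * y) = 0"
      using tr_add[of "- (a / 2 * y)" "a / 2 * y"] p2 by (simp add: abs_trace_def power_0_left)
    have "tr (c * (y ^ (Q + 1) / 2) + Z + (a / 2 * y) + a / 2 * b)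
        = tr (c * (y ^ (Q + 1) / 2)) + tr Z + tr (a / 2 * y) + tr (a / 2 * b)" by (simp only: tr_add)
    also have "\<dots> = tr (c * (y ^ (Q + 1) / 2)) + (tr (- (a / 2 * y)) + tr (a / 2 * y)) + tr D"
      by (simp only: trZ ab add.assoc)
    also have "\<dots> = tr (c * (y ^ (Q + 1) / 2)) + tr D" by (simp only: cancel add_0_right)
    finally show ?thesis unfolding L .
  qed
  have "(\<Sum>x\<in>UNIV. add_char p n (c * (x ^ (Q + 1) / 2) + a * x))
      = (\<Sum>x\<in>range (\<lambda>y. y + b). add_char p n (c * (x ^ (Q + 1) / 2) + a * x))"
  proof -
    have "range (\<lambda>y. y + b) = UNIV" by (rule surjI[of _ "\<lambda>x. x - b"]) simp
    thus ?thesis by simp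
  qed
  also have "\<dots> = (\<Sum>y\<in>UNIV. add_char p n (c * ((y + b) ^ (Q + 1) / 2) + a * (y + b)))"
    by (subst sum.reindex) (auto simp: inj_on_def)
  also have "\<dots> = (\<Sum>y\<in>UNIV. add_char p n (c * (y ^ (Q + 1) / 2) + D))"
  proof (intro sum.cong refl chi_tr)
    fix y show "tr (c * ((y + b) ^ (Q + 1) / 2) + a * (y + b)) = tr (c * (y ^ (Q + 1) / 2) + D)"
      unfolding tr_add[of "c * (y ^ (Q + 1) / 2)" D] by (rule pt)
  qed
  also have "\<dots> = add_char p n D * (\<Sum>y\<in>UNIV. add_char p n (c * (y ^ (Q + 1) / 2)))"
    by (simp add: chi_add sum_distrib_left mult.commute)
  finally show ?thesis unfolding Q_def D_def .
qed

lemma main_P: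
  assumes a0: "(a::'a) \<noteq> 0"
  shows "of_nat (p ^ t) * (\<Sum>x\<in>{x::'a. rel_trace (p ^ t) s (x ^ (p ^ (t * s) + 1)) = 0}. add_char p n (a * x))
       = - of_nat (p ^ (t * s)) * ((if rel_trace (p ^ t) s (a ^ (p ^ (t * s) + 1)) = 0 then of_nat (p ^ t) else 0) - 1)"
proof -
  define Q where "Q = p ^ (t * s)"
  define Kr where "Kr = {c::'a. c ^ (p ^ t) = c}"
  define RT where "RT u = rel_trace (p ^ t) s u" for u :: 'a
  define G where "G = (\<Sum>y\<in>UNIV. add_char p n (1 * (y ^ (Q + 1) / 2)))"
  have ind: "(\<Sum>c\<in>Kr. add_char p n (c * (u / 2))) = (if RT u = 0 then of_nat (p ^ t) else 0)"
    if "u ^ Q = u" for u using indicator[of u] that unfolding Kr_def RT_def Q_def by simp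
  have NK: "(x ^ (Q + 1)) ^ Q = x ^ (Q + 1)" for x :: 'a unfolding Q_def by (rule Nm_Kq)
  have "of_nat (p ^ t) * (\<Sum>x\<in>{x::'a. RT (x ^ (Q + 1)) = 0}. add_char p n (a * x))
      = (\<Sum>x\<in>UNIV. (if RT (x ^ (Q + 1)) = 0 then of_nat (p ^ t) else 0) * add_char p n (a * x))"
  proof -
    have "(\<Sum>x\<in>UNIV. (if RT (x ^ (Q + 1)) = 0 then of_nat (p ^ t) else 0) * add_char p n (a * x))
        = (\<Sum>x\<in>UNIV. if RT (x ^ (Q + 1)) = 0 then of_nat (p ^ t) * add_char p n (a * x) else 0)"
      by (intro sum.cong refl) simp
    also have "\<dots> = (\<Sum>x\<in>{x\<in>UNIV. RT (x ^ (Q + 1)) = 0}. of_nat (p ^ t) * add_char p n (a * x))"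
      by (rule sum.inter_filter[symmetric]) simp
    also have "\<dots> = of_nat (p ^ t) * (\<Sum>x\<in>{x::'a. RT (x ^ (Q + 1)) = 0}. add_char p n (a * x))"
      by (simp only: sum_distrib_left UNIV_I simp_thms)
    finally show ?thesis by (rule sym)
  qed
  also have "\<dots> = (\<Sum>x\<in>UNIV. (\<Sum>c\<in>Kr. add_char p n (c * (x ^ (Q + 1) / 2))) * add_char p n (a * x))"
    by (intro sum.cong refl) (simp only: ind[OF NK])
  also have "\<dots> = (\<Sum>x\<in>UNIV. \<Sum>c\<in>Kr. add_char p n (c * (x ^ (Q + 1) / 2) + a * x))"
    by (simp add: sum_distrib_right chi_add)
  also have "\<dots> = (\<Sum>c\<in>Kr. \<Sum>x\<in>UNIV. add_char p n (c * (x ^ (Q + 1) / 2) + a * x))"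
    by (rule sum.swap)
  also have "\<dots> = (\<Sum>x\<in>UNIV. add_char p n (0 * (x ^ (Q + 1) / 2) + a * x))
       + (\<Sum>c\<in>Kr - {0}. \<Sum>x\<in>UNIV. add_char p n (c * (x ^ (Q + 1) / 2) + a * x))"
  proof -
    have "0 \<in> Kr" unfolding Kr_def using p2 by (simp add: zero_power)
    thus ?thesis by (simp add: sum.remove)
  qed
  also have "(\<Sum>x\<in>UNIV. add_char p n (0 * (x ^ (Q + 1) / 2) + a * x)) = 0"
    using sum_ax[OF a0] by simp
  also have "(\<Sum>c\<in>Kr - {0}. \<Sum>x\<in>UNIV. add_char p n (c * (x ^ (Q + 1) / 2) + a * x))
      = (\<Sum>c\<in>Kr - {0}. add_char p n (- (a ^ (Q + 1)) / (2 * c)) * (- of_nat Q))"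
  proof (intro sum.cong refl)
    fix c assume "c \<in> Kr - {0}"
    hence c: "c ^ (p ^ t) = c" "c \<noteq> 0" unfolding Kr_def by auto
    show "(\<Sum>x\<in>UNIV. add_char p n (c * (x ^ (Q + 1) / 2) + a * x)) = add_char p n (- (a ^ (Q + 1)) / (2 * c)) * (- of_nat Q)"
      unfolding Q_def shift[OF c] gauss0[OF c] ..
  qed
  also have "(\<Sum>c\<in>Kr - {0}. add_char p n (- (a ^ (Q + 1)) / (2 * c)) * (- of_nat Q))
      = - of_nat Q * (\<Sum>c\<in>Kr - {0}. add_char p n ((- 1 / c) * (a ^ (Q + 1) / 2)))"
    by (simp add: sum_distrib_left mult.commute)
  also have "(\<Sum>c\<in>Kr - {0}. add_char p n ((- 1 / c) * (a ^ (Q + 1) / 2)))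
      = (\<Sum>d\<in>(\<lambda>c. - 1 / c) ` (Kr - {0}). add_char p n (d * (a ^ (Q + 1) / 2)))"
    by (subst sum.reindex) (auto simp: inj_on_def)
  also have "(\<lambda>c. - 1 / c) ` (Kr - {0}) = Kr - {0}"
  proof
    show "(\<lambda>c. - 1 / c) ` (Kr - {0}) \<subseteq> Kr - {0}"
    proof
      fix d assume "d \<in> (\<lambda>c. - 1 / c) ` (Kr - {0})"
      then obtain c where c: "c \<in> Kr" "c \<noteq> 0" "d = - 1 / c" by auto
      have "(- 1 :: 'a) ^ (p ^ t) = - 1" using K_neg[of 1 t] by simp
      hence "(- 1 / c) ^ (p ^ t) = - 1 / c" by (rule K_div) (use c in \<open>simp add: Kr_def\<close>)
      thus "d \<in> Kr - {0}" using c unfolding Kr_def by simp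
    qed
    show "Kr - {0} \<subseteq> (\<lambda>c. - 1 / c) ` (Kr - {0})"
    proof
      fix d assume d: "d \<in> Kr - {0}"
      have "(- 1 :: 'a) ^ (p ^ t) = - 1" using K_neg[of 1 t] by simp
      hence "(- 1 / d) ^ (p ^ t) = - 1 / d" by (rule K_div) (use d in \<open>simp add: Kr_def\<close>)
      hence "- 1 / d \<in> Kr - {0}" using d unfolding Kr_def by simp
      moreover have "d = - 1 / (- 1 / d)" using d by simp
      ultimately show "d \<in> (\<lambda>c. - 1 / c) ` (Kr - {0})" by blast
    qed
  qed
  also have "(\<Sum>d\<in>Kr - {0}. add_char p n (d * (a ^ (Q + 1) / 2)))
      = (\<Sum>d\<in>Kr. add_char p n (d * (a ^ (Q + 1) / 2))) - 1"
  proof -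
    have "0 \<in> Kr" unfolding Kr_def using p2 by (simp add: zero_power)
    thus ?thesis using chi_0 by (simp add: sum_diff1)
  qed
  also have "(\<Sum>d\<in>Kr. add_char p n (d * (a ^ (Q + 1) / 2))) = (if RT (a ^ (Q + 1)) = 0 then of_nat (p ^ t) else 0)"
    by (rule ind[OF NK])
  finally show ?thesis unfolding Q_def RT_def by simp
qed

end

end

theorem mainTheorem10:
  fixes p t s :: nat and a :: "'a::{field,finite}"
  assumes "prime p" and "odd p" and "t > 0" and "s > 0"
    and "card (UNIV :: 'a set) = ((p ^ t) ^ s) ^ 2"
    and "a \<noteq> 0"
  shows "(let r = p ^ t; q = r ^ s;
             P = (\<Sum>x\<in>{x::'a. rel_trace r s (x ^ (q + 1)) = 0}. add_char p (2 * t * s) (a * x))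
          in (rel_trace r s (a ^ (q + 1)) = 0 \<longrightarrow> P = - (of_nat q / of_nat r) * (of_nat r - 1))
           \<and> (rel_trace r s (a ^ (q + 1)) \<noteq> 0 \<longrightarrow> P = of_nat q / of_nat r))"
proof -
  define n where "n = 2 * t * s"
  have cardU: "card (UNIV :: 'a set) = p ^ n"
  proof -
    have "((p ^ t) ^ s) ^ 2 = p ^ (t * s * 2)" by (simp only: power_mult)
    also have "t * s * 2 = n" unfolding n_def by simp
    finally show ?thesis using assms(5) by simp
  qed
  have npos: "n > 0" using assms(3,4) unfolding n_def by simp
  have Qe: "(p ^ t) ^ s = p ^ (t * s)" by (simp add: power_mult)
  define P where "P = (\<Sum>x\<in>{x::'a. rel_trace (p ^ t) s (x ^ (p ^ (t * s) + 1)) = 0}. add_char p n (a * x))"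
  define R where "R = rel_trace (p ^ t) s (a ^ (p ^ (t * s) + 1))"
  have M: "of_nat (p ^ t) * P = - of_nat (p ^ (t * s)) * ((if R = 0 then of_nat (p ^ t) else 0) - 1)"
    unfolding P_def R_def
    by (rule main_P[OF cardU assms(1) npos n_def assms(3) assms(4) assms(2) assms(6)])
  have r0: "(of_nat (p ^ t) :: complex) \<noteq> 0" using assms(1) by (simp add: prime_gt_0_nat)
  have "(R = 0 \<longrightarrow> P = - (of_nat (p ^ (t * s)) / of_nat (p ^ t)) * (of_nat (p ^ t) - 1))
      \<and> (R \<noteq> 0 \<longrightarrow> P = of_nat (p ^ (t * s)) / of_nat (p ^ t))"
  proof (intro conjI impI)
    assume "R = 0"
    with M have "of_nat (p ^ t) * P = - of_nat (p ^ (t * s)) * (of_nat (p ^ t) - 1)" by simp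
    thus "P = - (of_nat (p ^ (t * s)) / of_nat (p ^ t)) * (of_nat (p ^ t) - 1)"
      using r0 by (simp add: field_simps)
  next
    assume "R \<noteq> 0"
    with M have "of_nat (p ^ t) * P = of_nat (p ^ (t * s))" by simp
    thus "P = of_nat (p ^ (t * s)) / of_nat (p ^ t)"
      using r0 by (simp add: field_simps)
  qed
  thus ?thesis unfolding Let_def Qe P_def R_def n_def .
qed

end
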